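(* Consider the closed-loop system $$\dot x = Ax + Bu + Qw,\qquad \dot u = -\epsilon\, \widetilde H^T \nabla \Phi(x,u),$$ with $x\in\mathbb{R}^n$, $u\in\mathbb{R}^p$, a constant disturbance $w\in\mathbb{R}^q$ and a gain $\epsilon>0$. Suppose that: (i) there is a symmetric positive definite $P$ with $A^TP+PA\preceq -I_n$; (ii) $\tilde\Phi^w(u):=\Phi(Hu+Rw,u)$ is differentiable in $u$ for all $u$ and $w$; (iii) there exists $\ell>0$ with $\|\widetilde H^T(\nabla\Phi(x,u)-\nabla\Phi(x',u))\|\le \ell\|x-x'\|$ for all $x,x'\in\mathbb{R}^n$, $u\in\mathbb{R}^p$; (iv) the sublevel sets of $\tilde\Phi^w$ are compact; (v) $\Phi$ is convex. If $\epsilon<\frac{1}{2\ell\|PH\|}$, then every trajectory of the closed-loop system converges to the set of global solutions of $$\min_{x,u}\ \Phi(x,u)\quad\text{subject to}\quad x=Hu+Rw.$$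
   Context: $A\in\mathbb{R}^{n\times n}$, $B\in\mathbb{R}^{n\times p}$, $Q\in\mathbb{R}^{n\times q}$ are real matrices; under (i) $A$ is invertible, and $H:=-A^{-1}B$, $R:=-A^{-1}Q$, $\widetilde H^T:=[\,H^T\ \ I_p\,]$. $\Phi:\mathbb{R}^n\times\mathbb{R}^p\to\mathbb{R}$ is a differentiable cost function with gradient $\nabla\Phi(x,u)\in\mathbb{R}^{n+p}$. Norms are Euclidean / induced 2-norms. The disturbance $w$ is fixed. *)

theory Defs
  imports "HOL-Analysis.Analysis"
begin

text \<open>H = -A^{-1} B and R = -A^{-1} Q.\<close>
definition Hmat :: "real^'n^'n \<Rightarrow> real^'p^'n \<Rightarrow> real^'p^'n" where
  "Hmat A B = - (matrix_inv A ** B)"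

definition Rmat :: "real^'n^'n \<Rightarrow> real^'q^'n \<Rightarrow> real^'q^'n" where
  "Rmat A Q = - (matrix_inv A ** Q)"

text \<open>Htilde^T applied to a gradient (g_x, g_u) in R^{n+p}: H^T g_x + g_u.\<close>
definition HtildeT :: "real^'p^'n \<Rightarrow> real^'n \<Rightarrow> real^'p \<Rightarrow> real^'p" where
  "HtildeT H gx gu = transpose H *v gx + gu"

text \<open>Set of global solutions of min Phi(x,u) s.t. x = H u + R w.\<close>
definition global_solutions ::
  "(real^'n \<Rightarrow> real^'p \<Rightarrow> real) \<Rightarrow> real^'p^'n \<Rightarrow> real^'q^'n \<Rightarrow> real^'q \<Rightarrow> ((real^'n) \<times> (real^'p)) set" where
  "global_solutions \<Phi> H R w =
     {(x, u). x = H *v u + R *v w \<and>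
        (\<forall>x' u'. x' = H *v u' + R *v w \<longrightarrow> \<Phi> x u \<le> \<Phi> x' u')}"

end

theory Submission
  imports Defs
begin


lemma decr_lemma:
  fixes f f' :: "real \<Rightarrow> real"
  assumes d: "\<And>t. t \<ge> 0 \<Longrightarrow> (f has_real_derivative f' t) (at t within {0..})"
    and n: "\<And>t. t \<ge> 0 \<Longrightarrow> f' t \<le> 0" and a: "0 \<le> a" and ab: "a \<le> b"
  shows "f b \<le> f a"
proof (rule DERIV_nonpos_imp_decreasing_open[OF ab])
  fix t assume t: "a < t" "t < b"
  have "at t within {0..} = at t"
    by (rule at_within_open_subset[of _ "{0<..}"]) (use t a in auto)
  then show "\<exists>y. (f has_real_derivative y) (at t) \<and> y \<le> 0"
    using d[of t] n[of t] t a by auto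
next
  have "continuous_on {0..} f"
    unfolding continuous_on_eq_continuous_within
    using d DERIV_continuous by fastforce
  then show "continuous_on {a..b} f"
    by (rule continuous_on_subset) (use a in auto)
qed

lemma quad_lemma:
  fixes p q b a c :: real
  assumes "p > 0" "b^2 \<le> 4*p*q"
  shows "b*a*c \<le> p*a^2 + q*c^2"
proof -
  have "4*p*(p*a^2 - b*a*c + q*c^2) = (2*p*a - b*c)^2 + (4*p*q - b^2)*c^2"
    by (simp add: algebra_simps power2_eq_square)
  also have "\<dots> \<ge> 0" using assms by (intro add_nonneg_nonneg mult_nonneg_nonneg) auto
  finally have "0 \<le> p*a^2 - b*a*c + q*c^2"
    using assms(1) by (simp add: zero_le_mult_iff)
  then show ?thesis by simp
qed

lemma sq_sum_le: "((a::real) + b)^2 \<le> 2 * (a^2 + b^2)"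
proof -
  have "0 \<le> (a - b)^2" by simp
  then show ?thesis by (simp add: power2_eq_square algebra_simps)
qed

lemma chain_traj:
  fixes g :: "'a::real_normed_vector \<Rightarrow> 'b::real_normed_vector"
  assumes g: "(g has_derivative g') (at (f t))"
    and f: "(f has_vector_derivative f') (at t within S)"
  shows "((\<lambda>s. g (f s)) has_vector_derivative g' f') (at t within S)"
proof -
  from f have "(f has_derivative (\<lambda>x. x *\<^sub>R f')) (at t within S)"
    by (simp add: has_vector_derivative_def)
  moreover have "(g has_derivative g') (at (f t) within f ` S)"
    using g has_derivative_at_withinI by blast
  ultimately have "((g \<circ> f) has_derivative (g' \<circ> (\<lambda>x. x *\<^sub>R f'))) (at t within S)"
    by (rule diff_chain_within)
  moreover have "linear g'" using g has_derivative_linear by blast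
  ultimately show ?thesis
    by (simp add: has_vector_derivative_def o_def linear_scale)
qed



lemma pd_lower:
  fixes P :: "real^'n^'n"
  assumes P_pd: "\<And>v. v \<noteq> 0 \<Longrightarrow> v \<bullet> (P *v v) > 0"
  shows "\<exists>\<mu>>0. \<forall>v. \<mu> * (v \<bullet> v) \<le> v \<bullet> (P *v v)"
proof -
  have cont: "continuous_on (sphere 0 1) (\<lambda>v::real^'n. v \<bullet> (P *v v))"
    by (intro continuous_intros linear_continuous_on matrix_vector_mul_bounded_linear)
  have ne: "sphere (0::real^'n) 1 \<noteq> {}"
    by (simp add: sphere_eq_empty)
  obtain v0 where v0: "v0 \<in> sphere 0 1" and min: "\<forall>y\<in>sphere 0 1. v0 \<bullet> (P *v v0) \<le> y \<bullet> (P *v y)"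
    using continuous_attains_inf[OF compact_sphere ne cont] by blast
  have v0nz: "v0 \<noteq> 0" using v0 by auto
  define \<mu> where "\<mu> = v0 \<bullet> (P *v v0)"
  have mupos: "\<mu> > 0" using P_pd[OF v0nz] by (simp add: \<mu>_def)
  have "\<forall>v. \<mu> * (v \<bullet> v) \<le> v \<bullet> (P *v v)"
  proof
    fix v :: "real^'n"
    show "\<mu> * (v \<bullet> v) \<le> v \<bullet> (P *v v)"
    proof (cases "v = 0")
      case True then show ?thesis by simp
    next
      case False
      define w where "w = (1 / norm v) *\<^sub>R v"
      have "w \<in> sphere 0 1" using False by (simp add: w_def)
      then have "\<mu> \<le> w \<bullet> (P *v w)" using min by (simp add: \<mu>_def)
      also have "w \<bullet> (P *v w) = (1 / norm v)^2 * (v \<bullet> (P *v v))"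
        by (simp add: w_def matrix_vector_mult_scaleR inner_scaleR_left inner_scaleR_right power2_eq_square)
      finally have "\<mu> * (norm v)^2 \<le> v \<bullet> (P *v v)"
        using False by (simp add: field_simps)
      then show ?thesis by (simp add: power2_norm_eq_inner)
    qed
  qed
  then show ?thesis using mupos by blast
qed

lemma convex_tangent:
  fixes F :: "'a::real_normed_vector \<Rightarrow> real"
  assumes cvx: "convex_on UNIV F" and d: "(F has_derivative F') (at p)"
  shows "F p + F' (q - p) \<le> F q"
proof -
  define g where "g = (\<lambda>s::real. F (p + s *\<^sub>R (q - p)))"
  have gc: "convex_on UNIV g"
    unfolding g_def
  proof (rule convex_onI)
    fix u s1 s2 :: real assume u: "0 < u" "u < 1"
    have "p + ((1 - u) * s1 + u * s2) *\<^sub>R (q - p)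
        = (1 - u) *\<^sub>R (p + s1 *\<^sub>R (q - p)) + u *\<^sub>R (p + s2 *\<^sub>R (q - p))"
      by (simp add: algebra_simps)
    then show "F (p + ((1 - u) *\<^sub>R s1 + u *\<^sub>R s2) *\<^sub>R (q - p))
       \<le> (1 - u) * F (p + s1 *\<^sub>R (q - p)) + u * F (p + s2 *\<^sub>R (q - p))"
      using convex_onD[OF cvx, of "u" "p + s1 *\<^sub>R (q - p)" "p + s2 *\<^sub>R (q - p)"] u
      by simp
  qed simp
  have fd: "((\<lambda>s::real. p + s *\<^sub>R (q - p)) has_vector_derivative (q - p)) (at 0 within UNIV)"
    by (auto intro!: derivative_eq_intros)
  have "(g has_vector_derivative F' (q - p)) (at 0 within UNIV)"
    unfolding g_def using chain_traj[OF _ fd, of F F'] d by simp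
  then have "(g has_field_derivative F' (q - p)) (at 0 within UNIV)"
    by (simp add: has_real_derivative_iff_has_vector_derivative)
  from convex_on_imp_above_tangent[OF gc connected_UNIV _ _ this, of 1]
  show ?thesis by (simp add: g_def)
qed



lemma neg_mat_vec: "(- M) *v v = - (M *v (v::real^'a))"
  for M :: "real^'a^'b"
  by (simp add: matrix_vector_mult_def vec_eq_iff sum_negf)

lemma transp_dot: "(transpose M *v a) \<bullet> d = a \<bullet> (M *v d)"
  for M :: "real^'a^'b"
  by (simp add: dot_lmul_matrix)

lemma pair_vd:
  assumes "(f has_vector_derivative f') (at x within S)" "(g has_vector_derivative g') (at x within S)"
  shows "((\<lambda>t. (f t, g t)) has_vector_derivative (f', g')) (at x within S)"
  using has_derivative_Pair[OF assms[unfolded has_vector_derivative_def]]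
  unfolding has_vector_derivative_def by (simp add: scaleR_Pair)

lemma invertible_stuff:
  fixes A :: "real^'n^'n" and P :: "real^'n^'n"
  assumes P_sym: "transpose P = P"
    and lyap: "\<And>v. v \<bullet> ((transpose A ** P + P ** A) *v v) \<le> - (v \<bullet> v)"
  shows "A ** matrix_inv A = mat 1"
proof -
  have z: "v = 0" if "A *v v = 0" for v
  proof -
    have "v \<bullet> ((transpose A ** P + P ** A) *v v) = 0"
      using that
      by (simp add: matrix_vector_mult_add_rdistrib inner_add_right
          flip: matrix_vector_mul_assoc) (simp add: inner_commute[of v "(P *v v) v* A"] dot_lmul_matrix)
    then have "v \<bullet> v \<le> 0" using lyap[of v] by linarith
    then have "v \<bullet> v = 0" using inner_ge_zero[of v] by linarith
    then show ?thesis by simp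
  qed
  have "inj ((*v) A)"
  proof (rule injI)
    fix a b assume "A *v a = A *v b"
    then have "A *v (a - b) = 0" by (simp add: matrix_vector_mult_diff_distrib)
    then have "a - b = 0" by (rule z)
    then show "a = b" by simp
  qed
  then have "invertible A"
    using matrix_left_invertible_injective invertible_left_inverse by blast
  then show ?thesis
    unfolding invertible_def matrix_inv_def by (rule someI2_ex) auto
qed



theorem corollary1:
  fixes A :: "real^'n^'n" and B :: "real^'p^'n" and Q :: "real^'q^'n"
    and P :: "real^'n^'n"
    and \<Phi> :: "real^'n \<Rightarrow> real^'p \<Rightarrow> real"
    and gx :: "real^'n \<Rightarrow> real^'p \<Rightarrow> real^'n"
    and gu :: "real^'n \<Rightarrow> real^'p \<Rightarrow> real^'p"
    and w :: "real^'q" and \<epsilon> :: real and L :: real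
    and x :: "real \<Rightarrow> real^'n" and u :: "real \<Rightarrow> real^'p"
  assumes grad: "\<And>x0 u0. ((\<lambda>(x, u). \<Phi> x u) has_derivative
                   (\<lambda>(dx, du). gx x0 u0 \<bullet> dx + gu x0 u0 \<bullet> du)) (at (x0, u0))"
    and eps_pos: "\<epsilon> > 0"
    and P_sym: "transpose P = P"
    and P_pd: "\<And>v. v \<noteq> 0 \<Longrightarrow> v \<bullet> (P *v v) > 0"
    and lyap: "\<And>v. v \<bullet> ((transpose A ** P + P ** A) *v v) \<le> - (v \<bullet> v)"
    and diff_tilde: "\<And>w' u0. (\<lambda>u. \<Phi> (Hmat A B *v u + Rmat A Q *v w') u) differentiable (at u0)"
    and l_pos: "L > 0"
    and lip: "\<And>x1 x2 u0. norm (HtildeT (Hmat A B) (gx x1 u0) (gu x1 u0)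
                               - HtildeT (Hmat A B) (gx x2 u0) (gu x2 u0)) \<le> L * norm (x1 - x2)"
    and sublevel: "\<And>c. compact {u. \<Phi> (Hmat A B *v u + Rmat A Q *v w) u \<le> c}"
    and cvx: "convex_on UNIV (\<lambda>(x, u). \<Phi> x u)"
    and eps_small: "2 * \<epsilon> * L * onorm (\<lambda>v. (P ** Hmat A B) *v v) < 1"
    and x_ode: "\<And>t. t \<ge> 0 \<Longrightarrow> (x has_vector_derivative (A *v x t + B *v u t + Q *v w)) (at t within {0..})"
    and u_ode: "\<And>t. t \<ge> 0 \<Longrightarrow> (u has_vector_derivative
                 (- \<epsilon> *\<^sub>R HtildeT (Hmat A B) (gx (x t) (u t)) (gu (x t) (u t)))) (at t within {0..})"
  shows "global_solutions \<Phi> (Hmat A B) (Rmat A Q) w \<noteq> {} \<and>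
         ((\<lambda>t. infdist (x t, u t) (global_solutions \<Phi> (Hmat A B) (Rmat A Q) w)) \<longlongrightarrow> 0) at_top"
proof -
  define H where "H = Hmat A B"
  define R where "R = Rmat A Q"
  define S where "S = global_solutions \<Phi> H R w"
  define Ft where "Ft = (\<lambda>v. \<Phi> (H *v v + R *v w) v)"
  define G where "G = (\<lambda>v. HtildeT H (gx (H *v v + R *v w) v) (gu (H *v v + R *v w) v))"
  define y where "y = (\<lambda>t. HtildeT H (gx (x t) (u t)) (gu (x t) (u t)))"
  define z where "z = (\<lambda>t. x t - (H *v u t + R *v w))"
  define k where "k = onorm (\<lambda>v. (P ** H) *v v)"
  have u_ode': "(u has_vector_derivative (- \<epsilon> *\<^sub>R y t)) (at t within {0..})" if "t \<ge> 0" for t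
    using u_ode[OF that] by (simp add: y_def H_def)
  note lip' = lip[folded H_def]
  have sublevel': "compact {v. Ft v \<le> c}" for c
    using sublevel[of c] by (simp add: Ft_def H_def R_def)
  have diff': "Ft differentiable (at v)" for v
    using diff_tilde[of w v] by (simp add: Ft_def H_def R_def)
  have AA: "A ** matrix_inv A = mat 1" by (rule invertible_stuff[OF P_sym lyap])
  have AB: "A ** (matrix_inv A ** B) = B" by (simp add: matrix_mul_assoc AA)
  have AQ: "A ** (matrix_inv A ** Q) = Q" by (simp add: matrix_mul_assoc AA)
  have AH: "A *v (H *v v) = - (B *v v)" for v
    unfolding H_def Hmat_def
    by (simp add: neg_mat_vec vec.neg matrix_vector_mul_assoc AB)
  have AR: "A *v (R *v v) = - (Q *v v)" for v
    unfolding R_def Rmat_def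
    by (simp add: neg_mat_vec vec.neg matrix_vector_mul_assoc AQ)
  have kpos: "k \<ge> 0" unfolding k_def by (intro onorm_pos_le matrix_vector_mul_bounded_linear)
  have kb: "norm ((P ** H) *v v) \<le> k * norm v" for v
    unfolding k_def by (intro onorm matrix_vector_mul_bounded_linear)
  have eps_small': "2 * \<epsilon> * L * k < 1" using eps_small by (simp add: k_def H_def)

  text \<open>derivatives\<close>
  have z_d: "(z has_vector_derivative (A *v z t - H *v (- \<epsilon> *\<^sub>R y t))) (at t within {0..})"
    if t: "t \<ge> 0" for t
  proof -
    have "(z has_vector_derivative ((A *v x t + B *v u t + Q *v w) - (H *v (- \<epsilon> *\<^sub>R y t) + 0))) (at t within {0..})"
      unfolding z_def
      by (intro derivative_intros x_ode[OF t] bounded_linear.has_vector_derivative[OF matrix_vector_mul_bounded_linear] u_ode'[OF t])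
    moreover have "A *v x t + B *v u t + Q *v w = A *v z t"
      by (simp add: z_def matrix_vector_mult_diff_distrib matrix_vector_right_distrib AH AR)
    ultimately show ?thesis by simp
  qed
  have Ft_d: "((\<lambda>t. Ft (u t)) has_real_derivative (G (u t) \<bullet> (- \<epsilon> *\<^sub>R y t))) (at t within {0..})"
    if t: "t \<ge> 0" for t
  proof -
    let ?u' = "- \<epsilon> *\<^sub>R y t"
    have h1: "((\<lambda>s. H *v u s) has_vector_derivative H *v ?u') (at t within {0..})"
      by (rule bounded_linear.has_vector_derivative[OF matrix_vector_mul_bounded_linear u_ode'[OF t]])
    have h2: "((\<lambda>s. H *v u s + R *v w) has_vector_derivative H *v ?u') (at t within {0..})"
      using h1 by (simp add: has_vector_derivative_add_const)
    have fd: "((\<lambda>s. (H *v u s + R *v w, u s)) has_vector_derivative (H *v ?u', ?u')) (at t within {0..})"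
      by (rule pair_vd[OF h2 u_ode'[OF t]])
    have "((\<lambda>s. (\<lambda>(x, u). \<Phi> x u) (H *v u s + R *v w, u s)) has_vector_derivative
       (\<lambda>(dx, du). gx (H *v u t + R *v w) (u t) \<bullet> dx + gu (H *v u t + R *v w) (u t) \<bullet> du) (H *v ?u', ?u'))
       (at t within {0..})"
      by (rule chain_traj[OF grad fd])
    moreover have "(\<lambda>(dx, du). gx (H *v u t + R *v w) (u t) \<bullet> dx + gu (H *v u t + R *v w) (u t) \<bullet> du) (H *v ?u', ?u')
       = G (u t) \<bullet> ?u'"
      by (simp add: G_def HtildeT_def inner_add_left dot_lmul_matrix vec.neg matrix_vector_mult_scaleR algebra_simps)
    ultimately show ?thesis
      by (simp add: has_real_derivative_iff_has_vector_derivative Ft_def)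
  qed
  define q where "q = (\<lambda>t. z t \<bullet> (P *v z t))"
  define zd where "zd = (\<lambda>t. A *v z t - H *v (- \<epsilon> *\<^sub>R y t))"
  have Psym_dot: "(P *v a) \<bullet> b = a \<bullet> (P *v b)" for a b
    using transp_dot[of P a b] P_sym by simp
  have q_d: "(q has_real_derivative (2 * (z t \<bullet> (P *v zd t)))) (at t within {0..})"
    if t: "t \<ge> 0" for t
  proof -
    have zd': "(z has_vector_derivative zd t) (at t within {0..})" using z_d[OF t] by (simp add: zd_def)
    have pz: "((\<lambda>s. P *v z s) has_vector_derivative P *v zd t) (at t within {0..})"
      by (rule bounded_linear.has_vector_derivative[OF matrix_vector_mul_bounded_linear zd'])
    have "(q has_vector_derivative (z t \<bullet> (P *v zd t) + zd t \<bullet> (P *v z t))) (at t within {0..})"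
      unfolding q_def by (rule bounded_bilinear.has_vector_derivative[OF bounded_bilinear_inner zd' pz])
    moreover have "zd t \<bullet> (P *v z t) = z t \<bullet> (P *v zd t)"
      by (subst inner_commute) (rule Psym_dot)
    ultimately show ?thesis
      by (simp add: has_real_derivative_iff_has_vector_derivative)
  qed
  have lyap2: "2 * (v \<bullet> (P *v (A *v v))) \<le> - (v \<bullet> v)" for v
  proof -
    have "v \<bullet> ((transpose A ** P + P ** A) *v v) = v \<bullet> (transpose A *v (P *v v)) + v \<bullet> (P *v (A *v v))"
      by (simp add: matrix_vector_mult_add_rdistrib inner_add_right flip: matrix_vector_mul_assoc)
    also have "v \<bullet> (transpose A *v (P *v v)) = (P *v v) \<bullet> (A *v v)"
      by (subst inner_commute) (rule transp_dot)
    also have "\<dots> = v \<bullet> (P *v (A *v v))" by (rule Psym_dot)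
    finally show ?thesis using lyap[of v] by simp
  qed
  obtain \<alpha> where apos: "\<alpha> > 0" and acond: "\<epsilon> * (L + 2 * \<alpha> * k)^2 < 4 * \<alpha>"
  proof (cases "k = 0")
    case True
    show ?thesis
      by (rule that[of "\<epsilon> * L^2"]) (use True eps_pos l_pos in auto)
  next
    case False
    then have kp: "k > 0" using kpos by simp
    have "\<epsilon> * (L + 2 * (L / (2 * k)) * k)^2 = 4 * \<epsilon> * L^2"
      using kp by (simp add: field_simps power2_eq_square)
    also have "\<dots> < 4 * (L / (2 * k))"
    proof -
      have "4 * \<epsilon> * L^2 * k = 2 * L * (2 * \<epsilon> * L * k)" by (simp add: power2_eq_square)
      also have "\<dots> < 2 * L * 1" using eps_small' l_pos by (intro mult_strict_left_mono) auto
      finally show ?thesis using kp by (simp add: field_simps)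
    qed
    finally show ?thesis
      by (intro that[of "L / (2 * k)"]) (use kp l_pos in auto)
  qed
  define b where "b = \<epsilon> * (L + 2 * \<alpha> * k)"
  have bpos: "b \<ge> 0" unfolding b_def using eps_pos l_pos apos kpos by simp
  have b2: "b^2 < 4 * \<epsilon> * \<alpha>"
  proof -
    have "b^2 = \<epsilon> * (\<epsilon> * (L + 2 * \<alpha> * k)^2)" by (simp add: b_def power2_eq_square)
    also have "\<dots> < \<epsilon> * (4 * \<alpha>)" using acond eps_pos by (intro mult_strict_left_mono)
    finally show ?thesis by simp
  qed
  define \<delta> where "\<delta> = min (min \<epsilon> \<alpha> / 2) ((4 * \<epsilon> * \<alpha> - b^2) / (4 * (\<epsilon> + \<alpha>)))"
  have dpos: "\<delta> > 0" unfolding \<delta>_def using eps_pos apos b2 by auto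
  have de: "\<delta> < \<epsilon>" "\<delta> < \<alpha>" unfolding \<delta>_def using eps_pos apos by auto
  have db: "b^2 \<le> 4 * (\<epsilon> - \<delta>) * (\<alpha> - \<delta>)"
  proof -
    have "\<delta> * (4 * (\<epsilon> + \<alpha>)) \<le> 4 * \<epsilon> * \<alpha> - b^2"
    proof -
      have "\<delta> \<le> (4 * \<epsilon> * \<alpha> - b^2) / (4 * (\<epsilon> + \<alpha>))" by (simp add: \<delta>_def)
      then show ?thesis using eps_pos apos by (simp add: pos_le_divide_eq)
    qed
    moreover have "0 \<le> 4 * \<delta>^2" by simp
    ultimately have "b^2 \<le> 4 * \<epsilon> * \<alpha> - 4 * \<delta> * (\<epsilon> + \<alpha>) + 4 * \<delta>^2"
      by linarith
    also have "\<dots> = 4 * (\<epsilon> - \<delta>) * (\<alpha> - \<delta>)" by (simp add: algebra_simps power2_eq_square)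
    finally show ?thesis .
  qed
  define V where "V = (\<lambda>t. Ft (u t) + \<alpha> * q t)"
  define Vd where "Vd = (\<lambda>t. G (u t) \<bullet> (- \<epsilon> *\<^sub>R y t) + \<alpha> * (2 * (z t \<bullet> (P *v zd t))))"
  have V_d: "(V has_real_derivative Vd t) (at t within {0..})" if "t \<ge> 0" for t
    unfolding V_def Vd_def by (intro DERIV_add DERIV_cmult Ft_d q_d that)
  have Gy: "norm (G (u t) - y t) \<le> L * norm (z t)" for t
    using lip'[of "H *v u t + R *v w" "u t" "x t"]
    by (simp add: G_def y_def z_def norm_minus_commute)
  have Vd_le: "Vd t \<le> - \<delta> * ((norm (y t))^2 + (norm (z t))^2)" for t
  proof -
    define ny where "ny = norm (y t)"
    define nz where "nz = norm (z t)"
    have ny0: "ny \<ge> 0" "nz \<ge> 0" by (auto simp: ny_def nz_def)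
    have e1: "G (u t) \<bullet> (- \<epsilon> *\<^sub>R y t) = - \<epsilon> * (y t \<bullet> y t) - \<epsilon> * ((G (u t) - y t) \<bullet> y t)"
      by (simp add: inner_diff_left algebra_simps)
    have e2: "\<bar>(G (u t) - y t) \<bullet> y t\<bar> \<le> L * nz * ny"
    proof -
      have "\<bar>(G (u t) - y t) \<bullet> y t\<bar> \<le> norm (G (u t) - y t) * ny"
        unfolding ny_def by (rule Cauchy_Schwarz_ineq2)
      also have "\<dots> \<le> (L * nz) * ny"
        by (rule mult_right_mono) (use Gy[of t] ny0 in \<open>auto simp: nz_def\<close>)
      finally show ?thesis .
    qed
    have e3: "G (u t) \<bullet> (- \<epsilon> *\<^sub>R y t) \<le> - \<epsilon> * ny^2 + \<epsilon> * L * nz * ny"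
    proof -
      have "- ((G (u t) - y t) \<bullet> y t) \<le> L * nz * ny" using e2 by linarith
      then have "\<epsilon> * (- ((G (u t) - y t) \<bullet> y t)) \<le> \<epsilon> * (L * nz * ny)"
        using eps_pos by (intro mult_left_mono) auto
      moreover have "y t \<bullet> y t = ny^2" by (simp add: ny_def power2_norm_eq_inner)
      ultimately show ?thesis using e1 by (simp add: algebra_simps)
    qed
    have f1: "z t \<bullet> (P *v zd t) = z t \<bullet> (P *v (A *v z t)) + \<epsilon> * (z t \<bullet> (P *v (H *v y t)))"
      by (simp add: zd_def matrix_vector_mult_diff_distrib matrix_vector_right_distrib
          matrix_vector_mult_scaleR vec.neg inner_add_right)
    have f2: "\<bar>z t \<bullet> (P *v (H *v y t))\<bar> \<le> nz * (k * ny)"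
    proof -
      have "\<bar>z t \<bullet> (P *v (H *v y t))\<bar> \<le> nz * norm (P *v (H *v y t))"
        unfolding nz_def by (rule Cauchy_Schwarz_ineq2)
      also have "\<dots> \<le> nz * (k * ny)"
        by (rule mult_left_mono) (use kb[of "y t"] ny0 matrix_vector_mul_assoc[of P H "y t"] in \<open>auto simp: ny_def\<close>)
      finally show ?thesis .
    qed
    have f3: "\<alpha> * (2 * (z t \<bullet> (P *v zd t))) \<le> - \<alpha> * nz^2 + 2 * \<alpha> * \<epsilon> * k * nz * ny"
    proof -
      have g1: "\<epsilon> * (z t \<bullet> (P *v (H *v y t))) \<le> \<epsilon> * (nz * (k * ny))"
        using f2 eps_pos by (intro mult_left_mono) auto
      have g2: "z t \<bullet> z t = nz^2" by (simp add: nz_def power2_norm_eq_inner)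
      have "2 * (z t \<bullet> (P *v zd t)) \<le> (- (nz^2)) + 2 * (\<epsilon> * (nz * (k * ny)))"
        using f1 g1 g2 lyap2[of "z t"] by linarith
      then have "\<alpha> * (2 * (z t \<bullet> (P *v zd t))) \<le> \<alpha> * ((- (nz^2)) + 2 * (\<epsilon> * (nz * (k * ny))))"
        using apos by (intro mult_left_mono) auto
      then show ?thesis by (simp add: algebra_simps)
    qed
    have "Vd t \<le> - \<epsilon> * ny^2 + b * ny * nz - \<alpha> * nz^2"
      using e3 f3 unfolding Vd_def b_def by (simp add: algebra_simps)
    also have "b * ny * nz \<le> (\<epsilon> - \<delta>) * ny^2 + (\<alpha> - \<delta>) * nz^2"
      by (rule quad_lemma) (use de db in auto)
    finally show ?thesis by (simp add: ny_def nz_def algebra_simps)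
  qed
  have Vd_nonpos: "Vd t \<le> 0" for t
  proof -
    have "0 \<le> \<delta> * ((norm (y t))^2 + (norm (z t))^2)" using dpos by simp
    then show ?thesis using Vd_le[of t] by linarith
  qed
  have Vmono: "V b \<le> V a" if "0 \<le> a" "a \<le> b" for a b
    by (rule decr_lemma[OF V_d Vd_nonpos that])
  have q_nn: "q t \<ge> 0" for t
    using P_pd[of "z t"] by (cases "z t = 0") (auto simp: q_def)
  obtain \<mu> where mupos: "\<mu> > 0" and mu: "\<And>v. \<mu> * (v \<bullet> v) \<le> v \<bullet> (P *v v)"
    using pd_lower[OF P_pd] by blast
  define lam where "lam = onorm ((*v) P)"
  have lam0: "lam \<ge> 0" unfolding lam_def by (intro onorm_pos_le matrix_vector_mul_bounded_linear)
  have q_le: "q t \<le> lam * (norm (z t))^2" for t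
  proof -
    have "q t \<le> norm (z t) * norm (P *v z t)"
      unfolding q_def by (rule order_trans[OF abs_ge_self Cauchy_Schwarz_ineq2])
    also have "\<dots> \<le> norm (z t) * (lam * norm (z t))"
      unfolding lam_def by (intro mult_left_mono onorm matrix_vector_mul_bounded_linear) auto
    finally show ?thesis by (simp add: power2_eq_square algebra_simps)
  qed
  have q_ge: "\<mu> * (norm (z t))^2 \<le> q t" for t
    using mu[of "z t"] by (simp add: q_def power2_norm_eq_inner)
  have Ft_cont: "continuous_on UNIV Ft"
    by (intro continuous_at_imp_continuous_on ballI differentiable_imp_continuous_within diff')
  define K where "K = {v. Ft v \<le> V 0}"
  have Kc: "compact K" unfolding K_def by (rule sublevel')
  have u0K: "u 0 \<in> K" unfolding K_def V_def using q_nn[of 0] apos by simp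
  obtain us where usK: "us \<in> K" and usmin: "\<forall>v\<in>K. Ft us \<le> Ft v"
    using continuous_attains_inf[OF Kc _ continuous_on_subset[OF Ft_cont]] u0K by blast
  have usg: "Ft us \<le> Ft v" for v
  proof (cases "v \<in> K")
    case True then show ?thesis using usmin by blast
  next
    case False
    then have "Ft v > V 0" by (simp add: K_def)
    moreover have "Ft us \<le> Ft (u 0)" using usmin u0K by blast
    moreover have "Ft (u 0) \<le> V 0" using u0K by (simp add: K_def)
    ultimately show ?thesis by simp
  qed
  define mstar where "mstar = Ft us"
  have inS: "(H *v v + R *v w, v) \<in> S" if "Ft v = mstar" for v
    unfolding S_def global_solutions_def using that usg by (auto simp: mstar_def Ft_def)
  have Sne: "S \<noteq> {}" using inS[of us] by (auto simp: mstar_def)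
  have uK: "u t \<in> K" if "t \<ge> 0" for t
  proof -
    have "Ft (u t) \<le> V t" using q_nn[of t] apos by (simp add: V_def)
    also have "\<dots> \<le> V 0" by (rule Vmono) (use that in auto)
    finally show ?thesis by (simp add: K_def)
  qed
  define W where "W = (\<lambda>t. V t - mstar)"
  have Vge: "V t \<ge> mstar" for t
    using usg[of "u t"] mult_nonneg_nonneg[OF less_imp_le[OF apos] q_nn[of t]] by (simp add: V_def mstar_def)
  obtain D where Dpos: "D > 0" and Db: "\<And>v. v \<in> K \<Longrightarrow> norm (v - us) \<le> D"
  proof -
    obtain B where "B > 0" and B: "\<forall>v\<in>K. norm v \<le> B"
      using compact_imp_bounded[OF Kc] bounded_pos by blast
    show ?thesis
    proof (rule that[of "2 * B"])
      show "2 * B > 0" using \<open>B > 0\<close> by simp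
      fix v assume "v \<in> K"
      then have "norm v \<le> B" "norm us \<le> B" using B usK by auto
      then show "norm (v - us) \<le> 2 * B"
        using norm_triangle_ineq4[of v us] by linarith
    qed
  qed
  have tang: "Ft v - mstar \<le> G v \<bullet> (v - us)" for v
  proof -
    have "(\<lambda>(x, u). \<Phi> x u) (H *v v + R *v w, v)
        + (\<lambda>(dx, du). gx (H *v v + R *v w) v \<bullet> dx + gu (H *v v + R *v w) v \<bullet> du)
           ((H *v us + R *v w, us) - (H *v v + R *v w, v))
        \<le> (\<lambda>(x, u). \<Phi> x u) (H *v us + R *v w, us)"
      by (rule convex_tangent[OF cvx grad])
    moreover have "(\<lambda>(dx, du). gx (H *v v + R *v w) v \<bullet> dx + gu (H *v v + R *v w) v \<bullet> du)
           ((H *v us + R *v w, us) - (H *v v + R *v w, v)) = - (G v \<bullet> (v - us))"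
      by (simp add: G_def HtildeT_def inner_add_left dot_lmul_matrix matrix_vector_mult_diff_distrib
          inner_diff_right algebra_simps)
    ultimately show ?thesis by (simp add: Ft_def mstar_def)
  qed
  have Wb: "W t \<le> D * (norm (y t) + L * norm (z t)) + \<alpha> * lam * (norm (z t))^2" if t: "t \<ge> 0" for t
  proof -
    have "Ft (u t) - mstar \<le> norm (G (u t)) * norm (u t - us)"
      using tang[of "u t"] Cauchy_Schwarz_ineq2[of "G (u t)" "u t - us"] by linarith
    also have "\<dots> \<le> (norm (y t) + L * norm (z t)) * D"
    proof (rule mult_mono)
      have "norm (G (u t)) \<le> norm (y t) + norm (G (u t) - y t)"
        using norm_triangle_ineq[of "y t" "G (u t) - y t"] by simp
      then show "norm (G (u t)) \<le> norm (y t) + L * norm (z t)" using Gy[of t] by simp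
      show "norm (u t - us) \<le> D" using Db uK t by blast
    qed (use l_pos in auto)
    finally have "Ft (u t) - mstar \<le> D * (norm (y t) + L * norm (z t))" by (simp add: algebra_simps)
    moreover have "\<alpha> * q t \<le> \<alpha> * (lam * (norm (z t))^2)"
      using q_le[of t] apos by (intro mult_left_mono) auto
    ultimately show ?thesis by (simp add: W_def V_def algebra_simps)
  qed
  have Wsmall: "\<exists>T\<ge>0. W T < \<eta>" if eta: "\<eta> > 0" for \<eta>
  proof (rule ccontr)
    assume "\<not> ?thesis"
    then have Wge: "W t \<ge> \<eta>" if "t \<ge> 0" for t using that by force
    define C where "C = D * (1 + L) + \<alpha> * lam + 1"
    have Cpos: "C > 0" unfolding C_def using Dpos l_pos apos lam0 by (simp add: add_pos_nonneg)
    define r0 where "r0 = min 1 (\<eta> / C)"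
    have r0pos: "r0 > 0" unfolding r0_def using eta Cpos by simp
    have rge: "r0 \<le> norm (y t) + norm (z t)" if t: "t \<ge> 0" for t
    proof (rule ccontr)
      assume nt: "\<not> ?thesis"
      define r where "r = norm (y t) + norm (z t)"
      have rl: "r < r0" using nt by (simp add: r_def)
      have r0le: "r0 \<le> 1" "r0 \<le> \<eta> / C" by (auto simp: r0_def)
      have r0C: "C * r0 \<le> \<eta>" using r0le(2) Cpos by (simp add: field_simps)
      have nz_r: "norm (z t) \<le> r" "norm (y t) \<le> r" by (auto simp: r_def)
      have nz2: "(norm (z t))^2 \<le> r"
      proof -
        have "(norm (z t))^2 \<le> norm (z t) * 1" unfolding power2_eq_square
          using nz_r rl r0le by (intro mult_left_mono) auto
        then show ?thesis using nz_r by simp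
      qed
      have "W t \<le> D * (norm (y t) + L * norm (z t)) + \<alpha> * lam * (norm (z t))^2" by (rule Wb[OF t])
      also have "\<dots> \<le> D * (r + L * r) + \<alpha> * lam * r"
        using nz_r nz2 Dpos l_pos apos lam0
        by (intro add_mono mult_left_mono) (auto intro: mult_nonneg_nonneg)
      also have "\<dots> = (C - 1) * r" by (simp add: C_def algebra_simps)
      also have "\<dots> \<le> C * r"
      proof -
        have "0 \<le> r" by (simp add: r_def)
        then show ?thesis by (simp add: algebra_simps)
      qed
      also have "\<dots> < C * r0" using rl Cpos by simp
      also have "\<dots> \<le> \<eta>" by (rule r0C)
      finally show False using Wge[OF t] by simp
    qed
    define c where "c = \<delta> * r0^2 / 2"
    have cpos: "c > 0" unfolding c_def using dpos r0pos by simp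
    have Vdc: "Vd t + c \<le> 0" if t: "t \<ge> 0" for t
    proof -
      have "r0^2 \<le> (norm (y t) + norm (z t))^2"
        using rge[OF t] r0pos by (intro power_mono) auto
      also have "\<dots> \<le> 2 * ((norm (y t))^2 + (norm (z t))^2)"
        by (rule sq_sum_le)
      finally have "\<delta> * r0^2 \<le> \<delta> * (2 * ((norm (y t))^2 + (norm (z t))^2))"
        using dpos by (intro mult_left_mono) auto
      then show ?thesis using Vd_le[of t] by (simp add: c_def algebra_simps)
    qed
    define T where "T = (V 0 - mstar + 1) / c"
    have T0: "T \<ge> 0" unfolding T_def using Vge[of 0] cpos by simp
    have "(\<lambda>t. V t + c * t) T \<le> (\<lambda>t. V t + c * t) 0"
    proof (rule decr_lemma[OF _ _ order_refl T0])
      fix t :: real assume "t \<ge> 0"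
      show "((\<lambda>t. V t + c * t) has_real_derivative (Vd t + c)) (at t within {0..})"
        using V_d[OF \<open>t \<ge> 0\<close>] by (auto intro!: derivative_eq_intros)
      show "Vd t + c \<le> 0" by (rule Vdc) fact
    qed
    then have "V T + (V 0 - mstar + 1) \<le> V 0" using cpos by (simp add: T_def)
    then show False using Vge[of T] by simp
  qed
  have Wev: "\<forall>\<^sub>F t in at_top. W t < \<eta>" if eta: "\<eta> > 0" for \<eta>
  proof -
    obtain T where T: "T \<ge> 0" "W T < \<eta>" using Wsmall[OF eta] by blast
    show ?thesis unfolding eventually_at_top_linorder
    proof (intro exI allI impI)
      fix t assume "t \<ge> T"
      then have "V t \<le> V T" using T by (intro Vmono) auto
      then show "W t < \<eta>" using T by (simp add: W_def)
    qed
  qed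
  have t0ev: "\<forall>\<^sub>F t in at_top. (t::real) \<ge> 0" by (rule eventually_ge_at_top)
  have main: "((\<lambda>t. infdist (x t, u t) S) \<longlongrightarrow> 0) at_top"
  proof (rule tendstoI)
    fix e :: real assume e: "e > 0"
    define h where "h = onorm ((*v) H)"
    have h0: "h \<ge> 0" unfolding h_def by (intro onorm_pos_le matrix_vector_mul_bounded_linear)
    have hb: "norm (H *v v) \<le> h * norm v" for v
      unfolding h_def by (intro onorm matrix_vector_mul_bounded_linear)
    define \<rho> where "\<rho> = e / (2 * (h + 1))"
    have rpos: "\<rho> > 0" unfolding \<rho>_def using e h0 by simp
    define M where "M = {v. Ft v = mstar}"
    define Kr where "Kr = K \<inter> (\<Inter>m\<in>M. {v. \<rho> \<le> dist v m})"
    have "closed (\<Inter>m\<in>M. {v. \<rho> \<le> dist v m})"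
      by (intro closed_INT ballI closed_Collect_le continuous_intros)
    then have Krc: "compact Kr" unfolding Kr_def using Kc by (rule compact_Int_closed[rotated])
    have WFt: "Ft (u t) - mstar \<le> W t" for t
      using mult_nonneg_nonneg[OF less_imp_le[OF apos] q_nn[of t]] by (simp add: W_def V_def)
    obtain \<eta>2 where e2pos: "\<eta>2 > 0"
      and e2: "\<And>t. t \<ge> 0 \<Longrightarrow> W t < \<eta>2 \<Longrightarrow> \<exists>m\<in>M. dist (u t) m < \<rho>"
    proof (cases "Kr = {}")
      case True
      show ?thesis
      proof (rule that[of 1])
        fix t :: real assume t: "t \<ge> 0"
        then have "u t \<in> K" by (rule uK)
        then have "u t \<notin> (\<Inter>m\<in>M. {v. \<rho> \<le> dist v m})" using True by (auto simp: Kr_def)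
        then show "\<exists>m\<in>M. dist (u t) m < \<rho>" by (auto simp: not_le)
      qed simp
    next
      case False
      obtain vm where vm: "vm \<in> Kr" and vmin: "\<forall>v\<in>Kr. Ft vm \<le> Ft v"
        using continuous_attains_inf[OF Krc False continuous_on_subset[OF Ft_cont]] by blast
      have "vm \<notin> M"
      proof
        assume "vm \<in> M"
        then have "\<rho> \<le> dist vm vm" using vm by (auto simp: Kr_def)
        then show False using rpos by simp
      qed
      then have gap: "Ft vm > mstar" using usg[of vm] by (auto simp: M_def mstar_def)
      show ?thesis
      proof (rule that[of "Ft vm - mstar"])
        show "Ft vm - mstar > 0" using gap by simp
        fix t :: real assume t: "t \<ge> 0" and Wt: "W t < Ft vm - mstar"
        have "Ft (u t) < Ft vm" using WFt[of t] Wt by simp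
        then have "u t \<notin> Kr" using vmin by force
        moreover have "u t \<in> K" using t by (rule uK)
        ultimately show "\<exists>m\<in>M. dist (u t) m < \<rho>" by (auto simp: Kr_def not_le)
      qed
    qed
    define \<eta>1 where "\<eta>1 = \<alpha> * \<mu> * (e / 2)^2"
    have e1pos: "\<eta>1 > 0" unfolding \<eta>1_def using apos mupos e by simp
    have ev: "\<forall>\<^sub>F t in at_top. W t < min \<eta>1 \<eta>2 \<and> t \<ge> 0"
      using eventually_conj[OF Wev[of "min \<eta>1 \<eta>2"] t0ev] e1pos e2pos by simp
    show "\<forall>\<^sub>F t in at_top. dist (infdist (x t, u t) S) 0 < e"
    proof (rule eventually_mono[OF ev])
      fix t :: real assume a: "W t < min \<eta>1 \<eta>2 \<and> t \<ge> 0"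
      then have t: "t \<ge> 0" and W1: "W t < \<eta>1" and W2: "W t < \<eta>2" by auto
      have "\<alpha> * (\<mu> * (norm (z t))^2) \<le> \<alpha> * q t"
        using q_ge[of t] apos by (intro mult_left_mono) auto
      also have "\<alpha> * q t \<le> W t" using usg[of "u t"] by (simp add: W_def V_def mstar_def)
      also have "\<dots> < \<alpha> * (\<mu> * (e / 2)^2)" using W1 by (simp add: \<eta>1_def mult.assoc)
      finally have "\<mu> * (norm (z t))^2 < \<mu> * (e / 2)^2" using apos by simp
      then have "(norm (z t))^2 < (e / 2)^2" using mupos by simp
      then have nz: "norm (z t) < e / 2" by (rule power2_less_imp_less) (use e in simp)
      obtain m where mM: "m \<in> M" and dm: "dist (u t) m < \<rho>" using e2[OF t W2] by blast
      have mS: "(H *v m + R *v w, m) \<in> S" using mM by (intro inS) (simp add: M_def)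
      have "infdist (x t, u t) S \<le> dist (x t, u t) (H *v m + R *v w, m)"
        by (rule infdist_le[OF mS])
      also have "\<dots> = norm (x t - (H *v m + R *v w), u t - m)"
        by (simp add: dist_norm)
      also have "\<dots> \<le> norm (x t - (H *v m + R *v w)) + norm (u t - m)" by (rule norm_Pair_le)
      also have "x t - (H *v m + R *v w) = z t + H *v (u t - m)"
        by (simp add: z_def matrix_vector_mult_diff_distrib algebra_simps)
      also have "norm (z t + H *v (u t - m)) \<le> norm (z t) + h * norm (u t - m)"
        using norm_triangle_ineq[of "z t" "H *v (u t - m)"] hb[of "u t - m"] by linarith
      finally have "infdist (x t, u t) S \<le> norm (z t) + (h + 1) * norm (u t - m)"
        by (simp add: algebra_simps)
      also have "\<dots> < e / 2 + (h + 1) * \<rho>"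
      proof -
        have "(h + 1) * norm (u t - m) < (h + 1) * \<rho>"
          using dm h0 by (intro mult_strict_left_mono) (auto simp: dist_norm)
        then show ?thesis using nz by linarith
      qed
      also have "(h + 1) * \<rho> = e / 2" unfolding \<rho>_def using h0 by (simp add: field_simps)
      finally show "dist (infdist (x t, u t) S) 0 < e" by (simp add: infdist_nonneg)
    qed
  qed
  show ?thesis
    using Sne main by (simp add: S_def H_def R_def)
qed

end
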